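(* Let $p\in(0,1)$, let $\mathbb D[0,1]\subset\mathbb{C}$ be the open disk having the segment $[0,1]$ as a diameter, and define on holomorphic functions $f$ on $\mathbb D[0,1]$ \[ \mathcal B_p f(z)=\frac{p}{(1+z)^2}f\!\left(\frac1{1+z}\right)+\frac{1-p}{(1+z)^2}f\!\left(1-\frac1{1+z}\right), \] \[ \mathcal A_p f(z)=\sum_{n=2}^\infty\left[\frac{p}{(n+z)^2}f\!\left(\frac1{n+z}\right)+\frac{1-p}{(n+z)^2}f\!\left(1-\frac1{n+z}\right)\right]. \] Then the operator $\widehat{\mathcal L}_p=\mathcal A_p(1-\mathcal B_p)^{-1}$ is a well-defined nuclear operator on $\mathcal H^\infty(\mathbb D[0,1])$.
   Context: $\mathcal H^\infty(\mathbb D[0,1])$ denotes the Banach space of bounded holomorphic functions on $\mathbb D[0,1]$ with the supremum norm. *)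

theory Defs
  imports "HOL-Analysis.Analysis"
begin

definition Dsk :: "complex set" where
  "Dsk = ball (1/2) (1/2)"

text \<open>H-infinity of the disk, realised as functions that are holomorphic and bounded on
  the disk and (as a normalisation, so that equality of functions is equality on the disk)
  zero outside it.\<close>
definition Hinf :: "(complex \<Rightarrow> complex) set" where
  "Hinf = {f. f holomorphic_on Dsk \<and> bounded (f ` Dsk) \<and> (\<forall>z. z \<notin> Dsk \<longrightarrow> f z = 0)}"

definition hnorm :: "(complex \<Rightarrow> complex) \<Rightarrow> real" where
  "hnorm f = (SUP z\<in>Dsk. norm (f z))"

definition bdd_functional :: "((complex \<Rightarrow> complex) \<Rightarrow> complex) \<Rightarrow> bool" where
  "bdd_functional \<phi> \<longleftrightarrow>
     (\<forall>f\<in>Hinf. \<forall>g\<in>Hinf. \<phi> (\<lambda>z. f z + g z) = \<phi> f + \<phi> g) \<and>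
     (\<forall>f\<in>Hinf. \<forall>c. \<phi> (\<lambda>z. c * f z) = c * \<phi> f) \<and>
     (\<exists>C. \<forall>f\<in>Hinf. norm (\<phi> f) \<le> C * hnorm f)"

definition fnorm :: "((complex \<Rightarrow> complex) \<Rightarrow> complex) \<Rightarrow> real" where
  "fnorm \<phi> = Sup {norm (\<phi> f) | f. f \<in> Hinf \<and> hnorm f \<le> 1}"

definition nuclear_Hinf :: "((complex \<Rightarrow> complex) \<Rightarrow> (complex \<Rightarrow> complex)) \<Rightarrow> bool" where
  "nuclear_Hinf L \<longleftrightarrow>
     (\<exists>\<phi> :: nat \<Rightarrow> (complex \<Rightarrow> complex) \<Rightarrow> complex. \<exists>g :: nat \<Rightarrow> complex \<Rightarrow> complex.
        (\<forall>n. bdd_functional (\<phi> n)) \<and> (\<forall>n. g n \<in> Hinf) \<and>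
        summable (\<lambda>n. fnorm (\<phi> n) * hnorm (g n)) \<and>
        (\<forall>f\<in>Hinf. \<forall>z. L f z = (\<Sum>n. \<phi> n f * g n z)))"

definition Bop :: "real \<Rightarrow> (complex \<Rightarrow> complex) \<Rightarrow> (complex \<Rightarrow> complex)" where
  "Bop p f = (\<lambda>z. if z \<in> Dsk then
      of_real p / (1 + z)^2 * f (1 / (1 + z)) + (1 - of_real p) / (1 + z)^2 * f (1 - 1 / (1 + z))
    else 0)"

definition Aterm :: "real \<Rightarrow> (complex \<Rightarrow> complex) \<Rightarrow> complex \<Rightarrow> nat \<Rightarrow> complex" where
  "Aterm p f z n = of_real p / (of_nat n + z)^2 * f (1 / (of_nat n + z))
      + (1 - of_real p) / (of_nat n + z)^2 * f (1 - 1 / (of_nat n + z))"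

definition Aop :: "real \<Rightarrow> (complex \<Rightarrow> complex) \<Rightarrow> (complex \<Rightarrow> complex)" where
  "Aop p f = (\<lambda>z. if z \<in> Dsk then (\<Sum>n. Aterm p f z (n + 2)) else 0)"

end

theory Submission
  imports Defs "HOL-Complex_Analysis.Complex_Analysis" begin

lemma Dsk_iff: "z \<in> Dsk \<longleftrightarrow> (cmod z)^2 < Re z"
proof -
  have "z \<in> Dsk \<longleftrightarrow> (cmod (z - 1/2))^2 < (1/2)^2"
    unfolding Dsk_def mem_ball dist_norm norm_minus_commute[of "1/2"]
    by (metis norm_ge_zero power_strict_mono power2_less_imp_less zero_le_divide_iff zero_le_one zero_le_numeral pos2)
  also have "(cmod (z - 1/2))^2 = (cmod z)^2 - Re z + 1/4"
    unfolding cmod_power2 by (simp add: power2_eq_square algebra_simps)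
  finally show ?thesis by (simp add: power2_eq_square)
qed

lemma Dsk_Re: "z \<in> Dsk \<Longrightarrow> 0 < Re z"
  by (metis Dsk_iff le_less_trans zero_le_power2 norm_ge_zero)

lemma in_Dsk1: assumes "0 < Re u" shows "1/(1+u) \<in> Dsk"
proof -
  have "Re (1+u) > 0" using assms by simp
  then have "1 + u \<noteq> 0" by (metis zero_complex.sel(1) less_irrefl)
  then have nz: "cmod (1+u) > 0" by simp
  have "(cmod (1/(1+u)))^2 = 1 / (cmod (1+u))^2" by (simp add: norm_divide power_divide)
  moreover have "Re (1/(1+u)) = (1 + Re u) / (cmod (1+u))^2" unfolding cmod_power2 by (simp add: Re_divide)
  ultimately show ?thesis unfolding Dsk_iff using nz assms by (simp add: divide_strict_right_mono)
qed

lemma in_Dsk0: assumes "0 < Re u" shows "1 - 1/(1+u) \<in> Dsk"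
proof -
  have "Re (1+u) > 0" using assms by simp
  then have nz: "1 + u \<noteq> 0" by (metis zero_complex.sel(1) less_irrefl)
  have e: "1 - 1/(1+u) = u/(1+u)" using nz by (simp add: field_simps)
  have "(cmod (u/(1+u)))^2 = (cmod u)^2 / (cmod (1+u))^2" by (simp add: norm_divide power_divide)
  moreover have "Re (u/(1+u)) = (Re u + (cmod u)^2) / (cmod (1+u))^2" unfolding cmod_power2 by (simp add: Re_divide power2_eq_square algebra_simps)
  moreover have "cmod (1+u) > 0" using nz by simp
  ultimately show ?thesis unfolding Dsk_iff e using assms by (simp add: divide_strict_right_mono)
qed

lemma Dsk_open: "open Dsk" by (simp add: Dsk_def)
lemma half_Dsk: "1/2 \<in> Dsk" by (simp add: Dsk_def)
lemma Dsk_ne: "Dsk \<noteq> {}" using half_Dsk by auto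
lemma Dsk_nz: "z \<in> Dsk \<Longrightarrow> 1 + z \<noteq> 0"
  by (metis Dsk_Re add.commute add.right_neutral add_uminus_conv_diff diff_add_cancel less_numeral_extra(3) zero_complex.sel(1) less_asym uminus_complex.sel(1) one_complex.sel(1) neg_0_less_iff_less zero_less_one add_diff_cancel_left')
lemma Dsk_norm: "z \<in> Dsk \<Longrightarrow> cmod z < 1"
proof -
  assume "z \<in> Dsk"
  then have "(cmod z)^2 < Re z" "Re z \<le> cmod z" by (auto simp: Dsk_iff complex_Re_le_cmod)
  then show ?thesis by (smt (verit) norm_ge_zero power2_eq_square mult_le_cancel_left1)
qed
lemma Dsk_1z: "z \<in> Dsk \<Longrightarrow> 1 \<le> cmod (1+z)"
proof -
  assume "z \<in> Dsk"
  then have "0 < Re z" by (rule Dsk_Re)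
  moreover have "Re (1+z) \<le> cmod (1+z)" by (rule complex_Re_le_cmod)
  ultimately show ?thesis by simp
qed
lemma Dsk_w1: "z \<in> Dsk \<Longrightarrow> 1/(1+z) \<in> Dsk" using in_Dsk1 Dsk_Re by blast
lemma Dsk_w0: "z \<in> Dsk \<Longrightarrow> 1 - 1/(1+z) \<in> Dsk" using in_Dsk0 Dsk_Re by blast

lemma Hinf_iff: "f \<in> Hinf \<longleftrightarrow> f holomorphic_on Dsk \<and> (\<exists>B. \<forall>z\<in>Dsk. cmod (f z) \<le> B) \<and> (\<forall>z. z \<notin> Dsk \<longrightarrow> f z = 0)"
  unfolding Hinf_def bounded_iff by auto

lemma hnorm_ge: assumes "f \<in> Hinf" "z \<in> Dsk" shows "cmod (f z) \<le> hnorm f"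
proof -
  obtain B where B: "\<forall>z\<in>Dsk. cmod (f z) \<le> B" using assms(1) Hinf_iff by blast
  have "bdd_above ((\<lambda>z. cmod (f z)) ` Dsk)" using B by (auto intro: bdd_aboveI2)
  then show ?thesis unfolding hnorm_def using assms(2) by (rule cSUP_upper2) simp
qed

lemma hnorm_le: assumes "\<And>z. z \<in> Dsk \<Longrightarrow> cmod (f z) \<le> M" shows "hnorm f \<le> M"
  unfolding hnorm_def using assms Dsk_ne by (intro cSUP_least) auto

lemma hnorm_nonneg: "f \<in> Hinf \<Longrightarrow> 0 \<le> hnorm f"
  using hnorm_ge[OF _ half_Dsk] norm_ge_zero order_trans by blast

lemma Bop_in: "z \<in> Dsk \<Longrightarrow> Bop p f z = of_real p / (1 + z)^2 * f (1 / (1 + z)) + (1 - of_real p) / (1 + z)^2 * f (1 - 1 / (1 + z))"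
  by (simp add: Bop_def)
lemma Bop_out: "z \<notin> Dsk \<Longrightarrow> Bop p f z = 0"
  by (simp add: Bop_def)

lemma Bop_add: "Bop p (\<lambda>z. f z + g z) = (\<lambda>z. Bop p f z + Bop p g z)"
  unfolding Bop_def by (auto simp: fun_eq_iff algebra_simps)
lemma Bop_diff: "Bop p (\<lambda>z. f z - g z) = (\<lambda>z. Bop p f z - Bop p g z)"
  unfolding Bop_def by (auto simp: fun_eq_iff algebra_simps)
lemma Bop_cmult: "Bop p (\<lambda>z. c * f z) = (\<lambda>z. c * Bop p f z)"
  unfolding Bop_def by (auto simp: fun_eq_iff algebra_simps)

lemma comb_bound:
  fixes p :: real and x y b :: complex
  assumes "0 \<le> p" "p \<le> 1" "b \<noteq> 0"
  shows "cmod (of_real p / b * x + (1 - of_real p) / b * y) \<le> (p * cmod x + (1 - p) * cmod y) / cmod b"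
proof -
  have "cmod (of_real p / b * x + (1 - of_real p) / b * y) \<le> cmod (of_real p / b * x) + cmod ((1 - of_real p) / b * y)"
    by (rule norm_triangle_ineq)
  also have "cmod (of_real p / b * x) = p * cmod x / cmod b" using assms by (simp add: norm_mult norm_divide)
  also have "cmod ((1 - of_real p) / b * y) = (1 - p) * cmod y / cmod b"
  proof -
    have "(1 - of_real p) = (of_real (1 - p) :: complex)" by simp
    then show ?thesis using assms by (simp add: norm_mult norm_divide del: of_real_diff)
  qed
  finally show ?thesis by (simp add: add_divide_distrib)
qed

lemma M_nonneg: "(\<forall>w\<in>Dsk. cmod (f w) \<le> M) \<Longrightarrow> 0 \<le> M"
  using half_Dsk norm_ge_zero order_trans by blast

lemma Bop_bound1:
  assumes p: "0 \<le> p" "p \<le> 1" and B: "\<forall>w\<in>Dsk. cmod (f w) \<le> M" and z: "z \<in> Dsk"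
  shows "cmod (Bop p f z) \<le> M / (cmod (1+z))^2"
proof -
  have nz: "(1+z)^2 \<noteq> 0" using Dsk_nz[OF z] by simp
  have "cmod (Bop p f z) \<le> (p * cmod (f (1/(1+z))) + (1 - p) * cmod (f (1 - 1/(1+z)))) / cmod ((1+z)^2)"
    unfolding Bop_in[OF z] by (rule comb_bound[OF p nz])
  also have "\<dots> \<le> (p * M + (1 - p) * M) / cmod ((1+z)^2)"
    using B Dsk_w1[OF z] Dsk_w0[OF z] p
    by (intro divide_right_mono add_mono mult_left_mono) auto
  finally show ?thesis by (simp add: algebra_simps norm_power)
qed

lemma Bop_bound:
  assumes p: "0 \<le> p" "p \<le> 1" and B: "\<forall>w\<in>Dsk. cmod (f w) \<le> M" and z: "z \<in> Dsk"
  shows "cmod (Bop p f z) \<le> M"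
proof -
  have "M / (cmod (1+z))^2 \<le> M"
    using M_nonneg[OF B] Dsk_1z[OF z]
    by (simp add: divide_le_eq one_le_power mult_le_cancel_left1)
  then show ?thesis using Bop_bound1[OF assms] by linarith
qed

lemma w1_big: assumes z: "z \<in> Dsk" shows "5/4 \<le> cmod (1 + 1/(1+z))"
proof -
  have "cmod (1+z) \<le> 1 + cmod z" by (metis norm_one norm_triangle_ineq)
  then have a: "cmod (1+z) < 2" using Dsk_norm[OF z] by linarith
  have n: "cmod (1+z) > 0" using Dsk_nz[OF z] by simp
  have "Re (1/(1+z)) = Re (1+z) / (cmod (1+z))^2" unfolding cmod_power2 by (simp add: Re_divide)
  also have "Re (1+z) \<ge> 1" using Dsk_Re[OF z] by simp
  then have "Re (1+z) / (cmod (1+z))^2 \<ge> 1 / 4"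
  proof -
    have "(cmod (1+z))^2 \<le> 2^2" using a n by (intro power_mono) auto
    then have "(cmod (1+z))^2 \<le> 4" by simp
    moreover have "(cmod (1+z))^2 > 0" using n by simp
    ultimately show ?thesis using \<open>Re (1+z) \<ge> 1\<close> by (simp add: le_divide_eq)
  qed
  finally have "Re (1 + 1/(1+z)) \<ge> 5/4" by simp
  then show ?thesis using complex_Re_le_cmod order_trans by blast
qed

lemma Bop_bound2:
  assumes p: "0 \<le> p" "p \<le> 1" and B: "\<forall>w\<in>Dsk. cmod (f w) \<le> M" and z: "z \<in> Dsk"
  shows "cmod (Bop p (Bop p f) z) \<le> (1 - 9*p/25) * M"
proof -
  have M0: "0 \<le> M" using M_nonneg[OF B] .
  have nz: "(1+z)^2 \<noteq> 0" using Dsk_nz[OF z] by simp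
  let ?w1 = "1/(1+z)" and ?w0 = "1 - 1/(1+z)"
  have b1: "cmod (Bop p f ?w1) \<le> 16/25 * M"
  proof -
    have "cmod (Bop p f ?w1) \<le> M / (cmod (1+?w1))^2" by (rule Bop_bound1[OF p B Dsk_w1[OF z]])
    also have "\<dots> \<le> M / (5/4)^2" using w1_big[OF z] M0
      by (intro divide_left_mono power_mono mult_pos_pos) auto
    also have "M / (5/4)^2 = 16/25 * M" by (simp add: power2_eq_square)
    finally show ?thesis .
  qed
  have b0: "cmod (Bop p f ?w0) \<le> M" by (rule Bop_bound[OF p B Dsk_w0[OF z]])
  have "cmod (Bop p (Bop p f) z) \<le> (p * cmod (Bop p f ?w1) + (1 - p) * cmod (Bop p f ?w0)) / cmod ((1+z)^2)"
    unfolding Bop_in[OF z] by (rule comb_bound[OF p nz])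
  also have "\<dots> \<le> (p * (16/25 * M) + (1 - p) * M) / cmod ((1+z)^2)"
    using b1 b0 p by (intro divide_right_mono add_mono mult_left_mono) auto
  also have "\<dots> \<le> (p * (16/25 * M) + (1 - p) * M)"
  proof -
    have "1 \<le> cmod ((1+z)^2)" using Dsk_1z[OF z] by (simp add: norm_power one_le_power)
    moreover have "0 \<le> (p * (16/25 * M) + (1 - p) * M)" using p M0 by simp
    ultimately show ?thesis by (simp add: divide_le_eq mult_le_cancel_left1)
  qed
  finally show ?thesis by (simp add: algebra_simps)
qed

lemma Bop_holo: assumes "f holomorphic_on Dsk" shows "Bop p f holomorphic_on Dsk"
proof -
  have g1: "(\<lambda>z. 1/(1+z)) holomorphic_on Dsk" using Dsk_nz by (intro holomorphic_intros) auto
  have g0: "(\<lambda>z. 1 - 1/(1+z)) holomorphic_on Dsk" using Dsk_nz by (intro holomorphic_intros) auto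
  have h1: "(\<lambda>z. f (1/(1+z))) holomorphic_on Dsk"
    using holomorphic_on_compose_gen[OF g1 assms] Dsk_w1 by (auto simp: o_def)
  have h0: "(\<lambda>z. f (1 - 1/(1+z))) holomorphic_on Dsk"
    using holomorphic_on_compose_gen[OF g0 assms] Dsk_w0 by (auto simp: o_def)
  have "(\<lambda>z. of_real p / (1 + z)^2 * f (1 / (1 + z)) + (1 - of_real p) / (1 + z)^2 * f (1 - 1 / (1 + z))) holomorphic_on Dsk"
    using Dsk_nz by (intro holomorphic_intros h1 h0) auto
  then show ?thesis by (rule holomorphic_transform) (simp add: Bop_in)
qed

locale pctx =
  fixes p :: real
  assumes p0: "0 < p" and p1: "p < 1"
begin

definition q where "q = 1 - 9*p/25"
definition r where "r = sqrt q"

lemma q_pos: "0 < q" and q_lt1: "q < 1" using p0 p1 by (auto simp: q_def)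
lemma r_pos: "0 < r" and r_lt1: "r < 1" and r_sq: "r * r = q"
  using q_pos q_lt1 by (auto simp: r_def)

lemma pl: "0 \<le> p" "p \<le> 1" using p0 p1 by auto

lemma Bop_Hinf: "f \<in> Hinf \<Longrightarrow> Bop p f \<in> Hinf"
proof -
  assume f: "f \<in> Hinf"
  then obtain M where M: "\<forall>w\<in>Dsk. cmod (f w) \<le> M" unfolding Hinf_iff by blast
  show ?thesis unfolding Hinf_iff
    using Bop_holo f Bop_bound[OF pl M] Bop_out unfolding Hinf_iff by blast
qed

lemma Bpow_Hinf: "f \<in> Hinf \<Longrightarrow> (Bop p ^^ k) f \<in> Hinf"
  by (induction k) (auto intro: Bop_Hinf)

lemma Bpow_out: "f \<in> Hinf \<Longrightarrow> z \<notin> Dsk \<Longrightarrow> (Bop p ^^ k) f z = 0"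
  using Bpow_Hinf Hinf_iff by blast

lemma Bpow_bound:
  assumes "\<forall>w\<in>Dsk. cmod (f w) \<le> M" "z \<in> Dsk"
  shows "cmod ((Bop p ^^ k) f z) \<le> r^k / r * M"
  using assms
proof (induction k arbitrary: f M z rule: nat_induct2)
  case 0
  have "M \<le> M / r" using M_nonneg[OF 0(1)] r_pos r_lt1 by (simp add: le_divide_eq mult_left_le)
  then show ?case using 0 by auto
next
  case 1
  then show ?case using Bop_bound[OF pl 1(1) 1(2)] r_pos by simp
next
  case (step n)
  have b: "\<forall>w\<in>Dsk. cmod (Bop p (Bop p f) w) \<le> q * M" using Bop_bound2[OF pl step(2)] by (simp add: q_def)
  have "(Bop p ^^ (n+2)) f = (Bop p ^^ n) (Bop p (Bop p f))"
    by (simp add: funpow_Suc_right del: funpow.simps)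
  then have "cmod ((Bop p ^^ (n+2)) f z) \<le> r^n / r * (q * M)" using step(1)[OF b step(3)] by simp
  also have "\<dots> = r^(n+2) / r * M" by (simp add: r_sq[symmetric] power_add power2_eq_square)
  finally show ?case .
qed

lemma geo_summable: "summable (\<lambda>k. r^k / r * M)"
proof -
  have "summable (\<lambda>k. r^k * (M / r))" using r_pos r_lt1 by (intro summable_mult2 summable_geometric) auto
  then show ?thesis by (simp add: field_simps)
qed

lemma geo_sum: "(\<Sum>k. r^k / r * M) = M / (r * (1 - r))"
proof -
  have "(\<Sum>k. r^k * (M / r)) = (\<Sum>k. r^k) * (M / r)"
    using r_pos r_lt1 by (intro suminf_mult2[symmetric] summable_geometric) auto
  also have "\<dots> = M / (r * (1 - r))" using r_pos r_lt1 by (simp add: suminf_geometric)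
  finally show ?thesis by (simp add: field_simps)
qed

definition Sinv where "Sinv g = (\<lambda>z. \<Sum>k. (Bop p ^^ k) g z)"

lemma Sinv_sum:
  assumes B: "\<forall>w\<in>Dsk. cmod (g w) \<le> M" and z: "z \<in> Dsk"
  shows "summable (\<lambda>k. (Bop p ^^ k) g z)" "cmod (Sinv g z) \<le> M / (r * (1 - r))"
proof -
  have le: "norm ((Bop p ^^ k) g z) \<le> r^k / r * M" for k using Bpow_bound[OF B z] by simp
  show sm: "summable (\<lambda>k. (Bop p ^^ k) g z)"
    by (rule summable_comparison_test'[OF geo_summable, of 0]) (use le in auto)
  have smn: "summable (\<lambda>k. norm ((Bop p ^^ k) g z))"
    by (rule summable_comparison_test'[OF geo_summable, of 0]) (use le in auto)
  have "cmod (Sinv g z) \<le> (\<Sum>k. norm ((Bop p ^^ k) g z))"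
    unfolding Sinv_def by (rule summable_norm[OF smn])
  also have "\<dots> \<le> (\<Sum>k. r^k / r * M)" by (rule suminf_le[OF le smn geo_summable])
  also have "\<dots> = M / (r * (1 - r))" by (rule geo_sum)
  finally show "cmod (Sinv g z) \<le> M / (r * (1 - r))" .
qed

lemma Sinv_Hinf:
  assumes g: "g \<in> Hinf" shows "Sinv g \<in> Hinf"
proof -
  obtain M where B: "\<forall>w\<in>Dsk. cmod (g w) \<le> M" using g unfolding Hinf_iff by blast
  have ul: "uniform_limit Dsk (\<lambda>n x. \<Sum>i<n. (Bop p ^^ i) g x) (\<lambda>x. suminf (\<lambda>i. (Bop p ^^ i) g x)) sequentially"
    by (rule Weierstrass_m_test[OF _ geo_summable]) (use Bpow_bound[OF B] in auto)
  have hol: "Sinv g holomorphic_on Dsk"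
    unfolding Sinv_def
  proof (rule holomorphic_uniform_sequence[OF Dsk_open])
    fix n :: nat
    show "(\<lambda>x. \<Sum>i<n. (Bop p ^^ i) g x) holomorphic_on Dsk"
      using Bpow_Hinf[OF g] unfolding Hinf_iff by (intro holomorphic_on_sum) auto
  next
    fix x assume "x \<in> Dsk"
    then obtain d where d: "0 < d" "cball x d \<subseteq> Dsk" using Dsk_open open_contains_cball by blast
    then show "\<exists>d>0. cball x d \<subseteq> Dsk \<and> uniform_limit (cball x d) (\<lambda>n x. \<Sum>i<n. (Bop p ^^ i) g x) (\<lambda>x. suminf (\<lambda>i. (Bop p ^^ i) g x)) sequentially"
      using uniform_limit_on_subset[OF ul] by blast
  qed
  have "\<forall>z\<in>Dsk. cmod (Sinv g z) \<le> M / (r * (1 - r))" using Sinv_sum(2)[OF B] by blast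
  moreover have "\<forall>z. z \<notin> Dsk \<longrightarrow> Sinv g z = 0" unfolding Sinv_def using Bpow_out[OF g] by simp
  ultimately show ?thesis using hol unfolding Hinf_iff by blast
qed

lemma T_Sinv:
  assumes g: "g \<in> Hinf" shows "(\<lambda>z. Sinv g z - Bop p (Sinv g) z) = g"
proof
  fix z
  obtain M where B: "\<forall>w\<in>Dsk. cmod (g w) \<le> M" using g unfolding Hinf_iff by blast
  show "Sinv g z - Bop p (Sinv g) z = g z"
  proof (cases "z \<in> Dsk")
    case False
    then show ?thesis using Bpow_out[OF g] g unfolding Sinv_def Hinf_iff by (simp add: Bop_out)
  next
    case z: True
    let ?a = "of_real p / (1 + z)^2" and ?b = "(1 - of_real p) / (1 + z)^2"
    let ?w1 = "1/(1+z)" and ?w0 = "1 - 1/(1+z)"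
    have s1: "summable (\<lambda>k. (Bop p ^^ k) g ?w1)" using Sinv_sum(1)[OF B Dsk_w1[OF z]] .
    have s0: "summable (\<lambda>k. (Bop p ^^ k) g ?w0)" using Sinv_sum(1)[OF B Dsk_w0[OF z]] .
    have sz: "summable (\<lambda>k. (Bop p ^^ k) g z)" using Sinv_sum(1)[OF B z] .
    have "Bop p (Sinv g) z = ?a * (\<Sum>k. (Bop p ^^ k) g ?w1) + ?b * (\<Sum>k. (Bop p ^^ k) g ?w0)"
      unfolding Bop_in[OF z] Sinv_def ..
    also have "\<dots> = (\<Sum>k. ?a * (Bop p ^^ k) g ?w1) + (\<Sum>k. ?b * (Bop p ^^ k) g ?w0)"
      by (simp only: suminf_mult[OF s1] suminf_mult[OF s0])
    also have "\<dots> = (\<Sum>k. ?a * (Bop p ^^ k) g ?w1 + ?b * (Bop p ^^ k) g ?w0)"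
      using s1 s0 by (intro suminf_add summable_mult)
    also have "\<dots> = (\<Sum>k. (Bop p ^^ Suc k) g z)"
      by (simp add: Bop_in[OF z])
    also have "\<dots> = Sinv g z - g z"
      unfolding Sinv_def using suminf_split_head[OF sz] by simp
    finally show ?thesis by simp
  qed
qed

lemma Hinf_diff: "f \<in> Hinf \<Longrightarrow> g \<in> Hinf \<Longrightarrow> (\<lambda>z. f z - g z) \<in> Hinf"
proof -
  assume f: "f \<in> Hinf" and g: "g \<in> Hinf"
  then obtain A B where A: "\<forall>w\<in>Dsk. cmod (f w) \<le> A" and B: "\<forall>w\<in>Dsk. cmod (g w) \<le> B" unfolding Hinf_iff by blast
  have "\<forall>w\<in>Dsk. cmod (f w - g w) \<le> A + B" using A B by (metis add_mono norm_triangle_ineq4 order_trans)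
  then show ?thesis using f g unfolding Hinf_iff by (auto intro: holomorphic_intros)
qed

lemma Hinf_add: "f \<in> Hinf \<Longrightarrow> g \<in> Hinf \<Longrightarrow> (\<lambda>z. f z + g z) \<in> Hinf"
proof -
  assume f: "f \<in> Hinf" and g: "g \<in> Hinf"
  then obtain A B where A: "\<forall>w\<in>Dsk. cmod (f w) \<le> A" and B: "\<forall>w\<in>Dsk. cmod (g w) \<le> B" unfolding Hinf_iff by blast
  have "\<forall>w\<in>Dsk. cmod (f w + g w) \<le> A + B" using A B by (metis add_mono norm_triangle_ineq order_trans)
  then show ?thesis using f g unfolding Hinf_iff by (auto intro: holomorphic_intros)
qed

lemma Hinf_cmult: "f \<in> Hinf \<Longrightarrow> (\<lambda>z. c * f z) \<in> Hinf"
proof -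
  assume f: "f \<in> Hinf"
  then obtain A where A: "\<forall>w\<in>Dsk. cmod (f w) \<le> A" unfolding Hinf_iff by blast
  have "\<forall>w\<in>Dsk. cmod (c * f w) \<le> cmod c * A" using A by (simp add: norm_mult mult_left_mono)
  then show ?thesis using f unfolding Hinf_iff by (auto intro: holomorphic_intros)
qed

lemma T_zero:
  assumes f: "f \<in> Hinf" and T: "\<And>z. f z - Bop p f z = 0" shows "f = (\<lambda>z. 0)"
proof
  fix z
  obtain M where B: "\<forall>w\<in>Dsk. cmod (f w) \<le> M" using f unfolding Hinf_iff by blast
  have fB: "Bop p f = f" using T by (auto simp: fun_eq_iff)
  have pw: "(Bop p ^^ k) f = f" for k by (induction k) (simp_all add: fB)
  show "f z = 0"
  proof (cases "z \<in> Dsk")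
    case False then show ?thesis using f unfolding Hinf_iff by blast
  next
    case z: True
    have le: "cmod (f z) \<le> r^k / r * M" for k using Bpow_bound[OF B z, of k] pw by simp
    have "(\<lambda>k. r^k / r * M) \<longlonglongrightarrow> 0 / r * M" using r_pos r_lt1
      by (intro tendsto_intros LIMSEQ_power_zero) auto
    then have lim: "(\<lambda>k. r^k / r * M) \<longlonglongrightarrow> 0" by simp
    have "cmod (f z) \<le> 0" using LIMSEQ_le_const[OF lim, of "cmod (f z)"] le by auto
    then show ?thesis by simp
  qed
qed

definition T where "T f = (\<lambda>z. f z - Bop p f z)"

lemma T_Hinf: "f \<in> Hinf \<Longrightarrow> T f \<in> Hinf"
  unfolding T_def by (intro Hinf_diff Bop_Hinf)

lemma T_inj: "inj_on T Hinf"
proof (rule inj_onI)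
  fix f g assume f: "f \<in> Hinf" and g: "g \<in> Hinf" and e: "T f = T g"
  have "(\<lambda>z. f z - g z) = (\<lambda>z. 0)"
  proof (rule T_zero[OF Hinf_diff[OF f g]])
    fix z
    have "f z - Bop p f z = g z - Bop p g z" using e unfolding T_def by meson
    then show "f z - g z - Bop p (\<lambda>z. f z - g z) z = 0" unfolding Bop_diff by (simp add: algebra_simps)
  qed
  then show "f = g" by (auto simp: fun_eq_iff)
qed

lemma T_bij: "bij_betw T Hinf Hinf"
  unfolding bij_betw_def
proof (intro conjI T_inj)
  show "T ` Hinf = Hinf"
  proof
    show "T ` Hinf \<subseteq> Hinf" using T_Hinf by blast
    show "Hinf \<subseteq> T ` Hinf"
    proof
      fix g assume g: "g \<in> Hinf"
      have "T (Sinv g) = g" unfolding T_def by (rule T_Sinv[OF g])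
      then show "g \<in> T ` Hinf" using Sinv_Hinf[OF g] by force
    qed
  qed
qed

lemma Tinv_eq: "g \<in> Hinf \<Longrightarrow> inv_into Hinf T g = Sinv g"
  by (rule inv_into_f_eq[OF T_inj Sinv_Hinf]) (auto simp: T_def T_Sinv)

definition E :: "complex set" where "E = ball (1/2) (3/4)"

lemma E_open: "open E" by (simp add: E_def)
lemma Dsk_E: "Dsk \<subseteq> E" unfolding Dsk_def E_def by (intro subset_ball) simp
lemma E_Re: "z \<in> E \<Longrightarrow> -1/4 < Re z"
proof -
  assume "z \<in> E"
  then have "cmod (z - 1/2) < 3/4" by (simp add: E_def dist_norm norm_minus_commute)
  moreover have "\<bar>Re (z - 1/2)\<bar> \<le> cmod (z - 1/2)" by (rule abs_Re_le_cmod)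
  ultimately show ?thesis by simp
qed

lemma Aterm_alt: "Aterm p f z (n+2) = of_real p / (1 + (of_nat (n+1) + z))^2 * f (1 / (1 + (of_nat (n+1) + z)))
   + (1 - of_real p) / (1 + (of_nat (n+1) + z))^2 * f (1 - 1 / (1 + (of_nat (n+1) + z)))"
proof -
  have "(of_nat (n+2) + z :: complex) = 1 + (of_nat (n+1) + z)" by simp
  then show ?thesis unfolding Aterm_def by (simp only:)
qed

lemma E_u: assumes "z \<in> E" shows "0 < Re (of_nat (n+1) + z)" "real n + 1 \<le> cmod (1 + (of_nat (n+1) + z))"
proof -
  show "0 < Re (of_nat (n+1) + z)" using E_Re[OF assms] by simp
  have "Re (1 + (of_nat (n+1) + z)) \<le> cmod (1 + (of_nat (n+1) + z))" by (rule complex_Re_le_cmod)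
  then show "real n + 1 \<le> cmod (1 + (of_nat (n+1) + z))" using E_Re[OF assms] by simp
qed

lemma Aterm_bound:
  assumes B: "\<forall>w\<in>Dsk. cmod (f w) \<le> M" and z: "z \<in> E"
  shows "cmod (Aterm p f z (n+2)) \<le> M * inverse (of_nat (n+1) ^ 2)"
proof -
  let ?u = "of_nat (n+1) + z"
  have u: "0 < Re ?u" and un: "real n + 1 \<le> cmod (1 + ?u)" using E_u[OF z] by auto
  have nz: "(1 + ?u)^2 \<noteq> 0" using un by auto
  have "cmod (Aterm p f z (n+2)) \<le> (p * cmod (f (1/(1+?u))) + (1 - p) * cmod (f (1 - 1/(1+?u)))) / cmod ((1+?u)^2)"
    unfolding Aterm_alt by (rule comb_bound[OF pl nz])
  also have "\<dots> \<le> (p * M + (1 - p) * M) / cmod ((1+?u)^2)"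
    using B in_Dsk1[OF u] in_Dsk0[OF u] pl
    by (intro divide_right_mono add_mono mult_left_mono) auto
  also have "\<dots> = M / (cmod (1+?u))^2" by (simp add: algebra_simps norm_power)
  also have "\<dots> \<le> M / (real n + 1)^2"
    using M_nonneg[OF B] un by (intro divide_left_mono power_mono mult_pos_pos) auto
  finally show ?thesis by (simp add: divide_inverse add.commute)
qed

definition K where "K = (\<Sum>n. inverse (real (n+1) ^ 2))"

lemma K_summable: "summable (\<lambda>n. inverse (real (n+1) ^ 2))"
  using summable_ignore_initial_segment[OF inverse_power_summable[of 2], of 1] by simp

lemma K_nonneg: "0 \<le> K" unfolding K_def by (intro suminf_nonneg K_summable) auto

definition Aext where "Aext f = (\<lambda>z. if z \<in> E then (\<Sum>n. Aterm p f z (n+2)) else 0)"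

lemma Aext_sum:
  assumes B: "\<forall>w\<in>Dsk. cmod (f w) \<le> M" and z: "z \<in> E"
  shows "summable (\<lambda>n. Aterm p f z (n+2))" "cmod (Aext f z) \<le> K * M"
proof -
  have le: "norm (Aterm p f z (n+2)) \<le> M * inverse (real (n+1) ^ 2)" for n using Aterm_bound[OF B z] by simp
  have gs: "summable (\<lambda>n. M * inverse (real (n+1) ^ 2))" by (intro summable_mult K_summable)
  show sm: "summable (\<lambda>n. Aterm p f z (n+2))"
    by (rule summable_comparison_test'[OF gs, of 0]) (use le in auto)
  have smn: "summable (\<lambda>n. norm (Aterm p f z (n+2)))"
    by (rule summable_comparison_test'[OF gs, of 0]) (use le in auto)
  have "cmod (Aext f z) \<le> (\<Sum>n. norm (Aterm p f z (n+2)))"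
    unfolding Aext_def using z summable_norm[OF smn] by simp
  also have "\<dots> \<le> (\<Sum>n. M * inverse (real (n+1) ^ 2))" by (rule suminf_le[OF le smn gs])
  also have "\<dots> = M * K" unfolding K_def by (rule suminf_mult[OF K_summable])
  finally show "cmod (Aext f z) \<le> K * M" by (simp add: mult.commute)
qed

lemma Aterm_holo:
  assumes f: "f holomorphic_on Dsk"
  shows "(\<lambda>z. Aterm p f z (n+2)) holomorphic_on E"
proof -
  let ?u = "\<lambda>z. of_nat (n+1) + z"
  have nz: "\<And>z. z \<in> E \<Longrightarrow> 1 + ?u z \<noteq> 0" using E_u(2) by (metis norm_zero not_one_le_zero add_le_same_cancel2 of_nat_0_le_iff order.trans le_add_same_cancel2 zero_le_one)
  have g1: "(\<lambda>z. 1/(1 + ?u z)) holomorphic_on E" using nz by (intro holomorphic_intros) auto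
  have g0: "(\<lambda>z. 1 - 1/(1 + ?u z)) holomorphic_on E" using nz by (intro holomorphic_intros) auto
  have h1: "(\<lambda>z. f (1/(1 + ?u z))) holomorphic_on E"
    using holomorphic_on_compose_gen[OF g1 f] in_Dsk1[OF E_u(1)] by (auto simp: o_def)
  have h0: "(\<lambda>z. f (1 - 1/(1 + ?u z))) holomorphic_on E"
    using holomorphic_on_compose_gen[OF g0 f] in_Dsk0[OF E_u(1)] by (auto simp: o_def)
  have "(\<lambda>z. of_real p / (1 + ?u z)^2 * f (1 / (1 + ?u z)) + (1 - of_real p) / (1 + ?u z)^2 * f (1 - 1 / (1 + ?u z))) holomorphic_on E"
    using nz by (intro holomorphic_intros h1 h0) auto
  then show ?thesis unfolding Aterm_alt .
qed

lemma Aext_holo: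
  assumes f: "f \<in> Hinf" shows "Aext f holomorphic_on E"
proof -
  obtain M where B: "\<forall>w\<in>Dsk. cmod (f w) \<le> M" using f unfolding Hinf_iff by blast
  have fh: "f holomorphic_on Dsk" using f unfolding Hinf_iff by blast
  have gs: "summable (\<lambda>n. M * inverse (real (n+1) ^ 2))" by (intro summable_mult K_summable)
  have ul: "uniform_limit E (\<lambda>n x. \<Sum>i<n. Aterm p f x (i+2)) (\<lambda>x. suminf (\<lambda>i. Aterm p f x (i+2))) sequentially"
    by (rule Weierstrass_m_test[OF _ gs]) (use Aterm_bound[OF B] in auto)
  have hol: "(\<lambda>x. suminf (\<lambda>i. Aterm p f x (i+2))) holomorphic_on E"
  proof (rule holomorphic_uniform_sequence[OF E_open])
    fix n :: nat
    show "(\<lambda>x. \<Sum>i<n. Aterm p f x (i+2)) holomorphic_on E"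
      using Aterm_holo[OF fh] by (intro holomorphic_on_sum) auto
  next
    fix x assume "x \<in> E"
    then obtain d where d: "0 < d" "cball x d \<subseteq> E" using E_open open_contains_cball by blast
    then show "\<exists>d>0. cball x d \<subseteq> E \<and> uniform_limit (cball x d) (\<lambda>n x. \<Sum>i<n. Aterm p f x (i+2)) (\<lambda>x. suminf (\<lambda>i. Aterm p f x (i+2))) sequentially"
      using uniform_limit_on_subset[OF ul] by blast
  qed
  then show ?thesis by (rule holomorphic_transform) (simp add: Aext_def)
qed

lemma Aterm_add: "Aterm p (\<lambda>w. f w + g w) z n = Aterm p f z n + Aterm p g z n"
  unfolding Aterm_def by (simp add: algebra_simps)
lemma Aterm_cmult: "Aterm p (\<lambda>w. c * f w) z n = c * Aterm p f z n"
  unfolding Aterm_def by (simp add: algebra_simps)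

lemma Aext_add: assumes "f \<in> Hinf" "g \<in> Hinf" shows "Aext (\<lambda>w. f w + g w) = (\<lambda>z. Aext f z + Aext g z)"
proof
  fix z
  obtain A B where A: "\<forall>w\<in>Dsk. cmod (f w) \<le> A" and B: "\<forall>w\<in>Dsk. cmod (g w) \<le> B" using assms unfolding Hinf_iff by blast
  show "Aext (\<lambda>w. f w + g w) z = Aext f z + Aext g z"
  proof (cases "z \<in> E")
    case True
    then show ?thesis unfolding Aext_def Aterm_add using suminf_add[OF Aext_sum(1)[OF A True] Aext_sum(1)[OF B True]] by simp
  qed (simp add: Aext_def)
qed

lemma Aext_cmult: assumes "f \<in> Hinf" shows "Aext (\<lambda>w. c * f w) = (\<lambda>z. c * Aext f z)"
proof
  fix z
  obtain A where A: "\<forall>w\<in>Dsk. cmod (f w) \<le> A" using assms unfolding Hinf_iff by blast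
  show "Aext (\<lambda>w. c * f w) z = c * Aext f z"
  proof (cases "z \<in> E")
    case True
    then show ?thesis unfolding Aext_def Aterm_cmult using suminf_mult[OF Aext_sum(1)[OF A True]] by simp
  qed (simp add: Aext_def)
qed

definition S0 where "S0 = 1 / (r * (1 - r))"
lemma S0_nonneg: "0 \<le> S0" using r_pos r_lt1 by (simp add: S0_def)

lemma Sinv_hbound: assumes f: "f \<in> Hinf" shows "\<forall>w\<in>Dsk. cmod (Sinv f w) \<le> S0 * hnorm f"
proof -
  have B: "\<forall>w\<in>Dsk. cmod (f w) \<le> hnorm f" using hnorm_ge[OF f] by blast
  show ?thesis using Sinv_sum(2)[OF B] by (simp add: S0_def)
qed

definition ph where "ph k f = (deriv ^^ k) (Aext (inv_into Hinf T f)) (1/2) / fact k"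
definition gk :: "nat \<Rightarrow> complex \<Rightarrow> complex" where "gk k = (\<lambda>z. if z \<in> Dsk then (z - 1/2)^k else 0)"

lemma cball_E: "cball (1/2) (2/3) \<subseteq> E" unfolding E_def by (auto simp: subset_iff)

lemma ph_bound: assumes f: "f \<in> Hinf" shows "cmod (ph k f) \<le> K * S0 * hnorm f / (2/3)^k"
proof -
  let ?h = "Sinv f"
  have h: "?h \<in> Hinf" by (rule Sinv_Hinf[OF f])
  have hol: "Aext ?h holomorphic_on E" by (rule Aext_holo[OF h])
  have holb: "Aext ?h holomorphic_on ball (1/2) (2/3)"
    using holomorphic_on_subset[OF hol] cball_E ball_subset_cball by blast
  have cont: "continuous_on (cball (1/2) (2/3)) (Aext ?h)"
    using holomorphic_on_imp_continuous_on[OF holomorphic_on_subset[OF hol cball_E]] .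
  have "cmod ((deriv ^^ k) (Aext ?h) (1/2)) \<le> fact k * (K * (S0 * hnorm f)) / (2/3)^k"
  proof (rule Cauchy_inequality[OF holb cont])
    fix x :: complex assume "cmod (1/2 - x) = 2/3"
    then have "x \<in> E" using cball_E by (auto simp: dist_norm)
    then show "cmod (Aext ?h x) \<le> K * (S0 * hnorm f)" by (rule Aext_sum(2)[OF Sinv_hbound[OF f]])
  qed simp
  also have "fact k * (K * (S0 * hnorm f)) / (2/3)^k = (K * S0 * hnorm f / (2/3)^k) * fact k" by simp
  finally have "cmod ((deriv ^^ k) (Aext ?h) (1/2)) / fact k \<le> K * S0 * hnorm f / (2/3)^k"
    by (simp add: pos_divide_le_eq)
  then show ?thesis unfolding ph_def Tinv_eq[OF f] by (simp add: norm_divide)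
qed

lemma Tinv_add: assumes f: "f \<in> Hinf" and g: "g \<in> Hinf"
  shows "inv_into Hinf T (\<lambda>z. f z + g z) = (\<lambda>z. Sinv f z + Sinv g z)"
proof (rule inv_into_f_eq[OF T_inj])
  show "(\<lambda>z. Sinv f z + Sinv g z) \<in> Hinf" by (intro Hinf_add Sinv_Hinf f g)
  show "T (\<lambda>z. Sinv f z + Sinv g z) = (\<lambda>z. f z + g z)"
    unfolding T_def Bop_add using fun_cong[OF T_Sinv[OF f]] fun_cong[OF T_Sinv[OF g]]
    by (auto simp: fun_eq_iff algebra_simps)
qed

lemma Tinv_cmult: assumes f: "f \<in> Hinf"
  shows "inv_into Hinf T (\<lambda>z. c * f z) = (\<lambda>z. c * Sinv f z)"
proof (rule inv_into_f_eq[OF T_inj])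
  show "(\<lambda>z. c * Sinv f z) \<in> Hinf" by (intro Hinf_cmult Sinv_Hinf f)
  show "T (\<lambda>z. c * Sinv f z) = (\<lambda>z. c * f z)"
    unfolding T_def Bop_cmult using fun_cong[OF T_Sinv[OF f]]
    by (auto simp: fun_eq_iff algebra_simps)
qed

lemma half_E: "1/2 \<in> E" by (simp add: E_def)

lemma zero_Hinf: "(\<lambda>z. 0) \<in> Hinf" unfolding Hinf_iff by auto

lemma ph_bdd: "bdd_functional (ph k)"
  unfolding bdd_functional_def
proof (intro conjI ballI allI)
  fix f g assume f: "f \<in> Hinf" and g: "g \<in> Hinf"
  have hf: "Sinv f \<in> Hinf" and hg: "Sinv g \<in> Hinf" using Sinv_Hinf f g by auto
  show "ph k (\<lambda>z. f z + g z) = ph k f + ph k g"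
    unfolding ph_def Tinv_add[OF f g] Tinv_eq[OF f] Tinv_eq[OF g] Aext_add[OF hf hg]
    using higher_deriv_add[OF Aext_holo[OF hf] Aext_holo[OF hg] E_open half_E]
    by (simp add: add_divide_distrib)
next
  fix f c assume f: "f \<in> Hinf"
  have hf: "Sinv f \<in> Hinf" using Sinv_Hinf f by auto
  show "ph k (\<lambda>z. c * f z) = c * ph k f"
    unfolding ph_def Tinv_cmult[OF f] Tinv_eq[OF f] Aext_cmult[OF hf]
    using higher_deriv_cmult[OF Aext_holo[OF hf] half_E E_open]
    by simp
next
  show "\<exists>C. \<forall>f\<in>Hinf. cmod (ph k f) \<le> C * hnorm f"
    by (rule exI[of _ "K * S0 / (2/3)^k"]) (use ph_bound in auto)
qed

lemma fnorm_ph: "fnorm (ph k) \<le> K * S0 / (2/3)^k" "0 \<le> fnorm (ph k)"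
proof -
  let ?X = "{cmod (ph k f) | f. f \<in> Hinf \<and> hnorm f \<le> 1}"
  have z: "cmod (ph k (\<lambda>z. 0)) \<in> ?X" using zero_Hinf hnorm_le[of "\<lambda>z. 0" 1] by auto
  have ub: "\<forall>x\<in>?X. x \<le> K * S0 / (2/3)^k"
  proof
    fix x assume "x \<in> ?X"
    then obtain f where f: "f \<in> Hinf" "hnorm f \<le> 1" and x: "x = cmod (ph k f)" by blast
    have "K * S0 * hnorm f \<le> K * S0 * 1" using f(2) K_nonneg S0_nonneg by (intro mult_left_mono) auto
    then have "K * S0 * hnorm f / (2/3)^k \<le> K * S0 / (2/3)^k" by (intro divide_right_mono) auto
    moreover have "cmod (ph k f) \<le> K * S0 * hnorm f / (2/3)^k" by (rule ph_bound[OF f(1)])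
    ultimately show "x \<le> K * S0 / (2/3)^k" using x by linarith
  qed
  show "fnorm (ph k) \<le> K * S0 / (2/3)^k" unfolding fnorm_def
    by (rule cSup_least) (use z ub in auto)
  have "cmod (ph k (\<lambda>z. 0)) \<le> fnorm (ph k)" unfolding fnorm_def
    by (rule cSup_upper[OF z]) (use ub in \<open>auto simp: bdd_above_def\<close>)
  then show "0 \<le> fnorm (ph k)" using norm_ge_zero order_trans by blast
qed

lemma gk_Hinf: "gk k \<in> Hinf"
proof -
  have "(\<lambda>z. (z - 1/2)^k) holomorphic_on Dsk" by (intro holomorphic_intros)
  then have "gk k holomorphic_on Dsk" by (rule holomorphic_transform) (simp add: gk_def)
  moreover have "\<forall>z\<in>Dsk. cmod (gk k z) \<le> 1"
  proof
    fix z assume "z \<in> Dsk"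
    then have "cmod (z - 1/2) \<le> 1" by (simp add: Dsk_def dist_norm norm_minus_commute)
    then show "cmod (gk k z) \<le> 1" using \<open>z \<in> Dsk\<close> by (simp add: gk_def norm_power power_le_one)
  qed
  ultimately show ?thesis unfolding Hinf_iff by (auto simp: gk_def)
qed

lemma hnorm_gk: "hnorm (gk k) \<le> (1/2)^k"
proof (rule hnorm_le)
  fix z assume "z \<in> Dsk"
  then have "cmod (z - 1/2) \<le> 1/2" by (simp add: Dsk_def dist_norm norm_minus_commute)
  then show "cmod (gk k z) \<le> (1/2)^k" using \<open>z \<in> Dsk\<close> by (simp add: gk_def norm_power power_mono)
qed

lemma summ: "summable (\<lambda>n. fnorm (ph n) * hnorm (gk n))"
proof (rule summable_comparison_test'[of "\<lambda>n. K * S0 * (3/4)^n" 0])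
  show "summable (\<lambda>n. K * S0 * (3/4)^n)" by (intro summable_mult summable_geometric) auto
  fix n :: nat
  have e0: "(1/2::real)/(2/3) = 3/4" by simp
  have e: "(3/4::real)^n = (1/2)^n / (2/3)^n" unfolding e0[symmetric] by (rule power_divide)
  have "fnorm (ph n) * hnorm (gk n) \<le> K * S0 / (2/3)^n * (1/2)^n"
    using fnorm_ph[of n] hnorm_gk[of n] hnorm_nonneg[OF gk_Hinf] K_nonneg S0_nonneg
    by (intro mult_mono) auto
  also have "\<dots> = K * S0 * (3/4)^n" unfolding e by simp
  finally show "norm (fnorm (ph n) * hnorm (gk n)) \<le> K * S0 * (3/4)^n"
    using fnorm_ph(2)[of n] hnorm_nonneg[OF gk_Hinf] by simp
qed

lemma expansion: assumes f: "f \<in> Hinf"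
  shows "Aop p (inv_into Hinf T f) z = (\<Sum>n. ph n f * gk n z)"
proof (cases "z \<in> Dsk")
  case False then show ?thesis by (simp add: Aop_def gk_def)
next
  case True
  have h: "Sinv f \<in> Hinf" by (rule Sinv_Hinf[OF f])
  have zE: "z \<in> E" using True Dsk_E by blast
  have "(\<lambda>n. (deriv ^^ n) (Aext (Sinv f)) (1/2) / fact n * (z - 1/2)^n) sums Aext (Sinv f) z"
    by (rule holomorphic_power_series[OF Aext_holo[OF h, unfolded E_def]]) (use zE in \<open>simp add: E_def\<close>)
  moreover have "Aext (Sinv f) z = Aop p (Sinv f) z" using True zE by (simp add: Aext_def Aop_def)
  ultimately show ?thesis using True unfolding Tinv_eq[OF f] ph_def gk_def by (simp add: sums_iff)
qed

lemma Aop_Hinf: assumes f: "f \<in> Hinf" shows "Aop p f \<in> Hinf"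
proof -
  obtain M where B: "\<forall>w\<in>Dsk. cmod (f w) \<le> M" using f unfolding Hinf_iff by blast
  have eq: "\<And>z. z \<in> Dsk \<Longrightarrow> Aext f z = Aop p f z" using Dsk_E by (auto simp: Aext_def Aop_def)
  have "Aop p f holomorphic_on Dsk"
    using holomorphic_on_subset[OF Aext_holo[OF f] Dsk_E] by (rule holomorphic_transform) (rule eq)
  moreover have "\<forall>z\<in>Dsk. cmod (Aop p f z) \<le> K * M" using Aext_sum(2)[OF B] Dsk_E eq by force
  ultimately show ?thesis unfolding Hinf_iff by (auto simp: Aop_def)
qed

end

theorem mainTheorem6:
  fixes p :: real
  assumes "0 < p" and "p < 1"
  shows "(\<forall>f\<in>Hinf. Bop p f \<in> Hinf)
    \<and> bij_betw (\<lambda>f z. f z - Bop p f z) Hinf Hinf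
    \<and> (\<forall>f\<in>Hinf. \<forall>z\<in>Dsk. summable (\<lambda>n. Aterm p f z (n + 2)))
    \<and> (\<forall>f\<in>Hinf. Aop p f \<in> Hinf)
    \<and> nuclear_Hinf (\<lambda>f. Aop p (inv_into Hinf (\<lambda>h z. h z - Bop p h z) f))"
proof -
  interpret P: pctx p using assms by unfold_locales
  have Teq: "(\<lambda>h z. h z - Bop p h z) = P.T" by (rule ext) (simp add: P.T_def)
  have c3: "\<forall>f\<in>Hinf. \<forall>z\<in>Dsk. summable (\<lambda>n. Aterm p f z (n + 2))"
  proof (intro ballI)
    fix f z assume f: "f \<in> Hinf" and z: "z \<in> Dsk"
    obtain M where B: "\<forall>w\<in>Dsk. cmod (f w) \<le> M" using f unfolding Hinf_iff by blast
    show "summable (\<lambda>n. Aterm p f z (n + 2))" using P.Aext_sum(1)[OF B] z P.Dsk_E by blast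
  qed
  have c5: "nuclear_Hinf (\<lambda>f. Aop p (inv_into Hinf P.T f))"
    unfolding nuclear_Hinf_def
    by (rule exI[of _ P.ph], rule exI[of _ P.gk]) (use P.ph_bdd P.gk_Hinf P.summ P.expansion in auto)
  show ?thesis unfolding Teq using P.Bop_Hinf P.T_bij c3 P.Aop_Hinf c5 by blast
qed

end
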